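(* For each $n$ let $\tau_n$ be the $2^n\times 2^n$ diagonal matrix with every diagonal entry equal to $2^{-n}$. For every natural number $k$ there is a constant $t$ such that for all $n$, $QK^{2^{-k}}(\tau_n)\ge n+K(n)-t$.
   Context: Let $\mathbb{U}$ be a fixed universal prefix-free Turing machine and $K$ the associated prefix-free Kolmogorov complexity (for a natural number $n$, $K(n)$ is the complexity of $n$). Finite sets of vectors with complex algebraic entries are coded by natural numbers via a fixed canonical effective indexing; $\mathbb{U}(\sigma)\downarrow=F$ means that $\mathbb{U}$ on input $\sigma$ halts and outputs the code of $F$. $\mathbb{C}^{2^n}_{alg}$ denotes the set of vectors in $\mathbb{C}^{2^n}$ all of whose entries are complex algebraic numbers. All logarithms are base 2. For a density matrix $\tau$ on $\mathbb{C}^{2^{n}}$ write $|\tau|=n$. For $\epsilon>0$ define $QK^{\epsilon}(\tau)=\inf\{|\sigma|+\log|F| : \mathbb{U}(\sigma)\downarrow=F,\ F \text{ an orthonormal subset of } \mathbb{C}^{2^{|\tau|}}_{alg},\ \sum_{v\in F}\langle v|\tau|v\rangle>\epsilon\}$, with $\inf\emptyset=\infty$. *)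

theory Defs
  imports Complex_Main "HOL-Library.Nat_Bijection" "HOL-Library.Extended_Real"
    "HOL-Computational_Algebra.Polynomial"
begin

datatype recf = Zf | Sf | Idf nat | Cnf recf "recf list" | Prf recf recf | Mnf recf

inductive evalr :: "recf \<Rightarrow> nat list \<Rightarrow> nat \<Rightarrow> bool" where
  ev_Z: "evalr Zf xs 0"
| ev_S: "evalr Sf (x # xs) (Suc x)"
| ev_Id: "i < length xs \<Longrightarrow> evalr (Idf i) xs (xs ! i)"
| ev_Cn: "list_all2 (\<lambda>g z. evalr g xs z) gs zs \<Longrightarrow> evalr f zs y \<Longrightarrow> evalr (Cnf f gs) xs y"
| ev_Pr0: "evalr f xs y \<Longrightarrow> evalr (Prf f g) (0 # xs) y"
| ev_PrS: "evalr (Prf f g) (n # xs) z \<Longrightarrow> evalr g (z # n # xs) y \<Longrightarrow> evalr (Prf f g) (Suc n # xs) y"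
| ev_Mn: "evalr f (y # xs) 0 \<Longrightarrow> (\<forall>z<y. \<exists>w. w > 0 \<and> evalr f (z # xs) w) \<Longrightarrow> evalr (Mnf f) xs y"

text \<open>Bijective coding of binary strings by natural numbers.\<close>
fun bits_to_nat :: "bool list \<Rightarrow> nat" where
  "bits_to_nat [] = 0"
| "bits_to_nat (b # bs) = 2 * bits_to_nat bs + (if b then 2 else 1)"

definition partial_computable :: "(bool list \<Rightarrow> nat option) \<Rightarrow> bool" where
  "partial_computable M \<longleftrightarrow> (\<exists>f. \<forall>\<sigma> y. evalr f [bits_to_nat \<sigma>] y \<longleftrightarrow> M \<sigma> = Some y)"

definition prefix_free_machine :: "(bool list \<Rightarrow> nat option) \<Rightarrow> bool" where
  "prefix_free_machine M \<longleftrightarrow>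
     (\<forall>\<sigma> \<rho>. M \<sigma> \<noteq> None \<longrightarrow> M (\<sigma> @ \<rho>) \<noteq> None \<longrightarrow> \<rho> = [])"

definition universal_pf_machine :: "(bool list \<Rightarrow> nat option) \<Rightarrow> bool" where
  "universal_pf_machine U \<longleftrightarrow> partial_computable U \<and> prefix_free_machine U \<and>
     (\<forall>M. partial_computable M \<and> prefix_free_machine M \<longrightarrow>
        (\<exists>\<rho>. \<forall>\<sigma>. U (\<rho> @ \<sigma>) = M \<sigma>))"

definition Kc :: "(bool list \<Rightarrow> nat option) \<Rightarrow> nat \<Rightarrow> nat" where
  "Kc U n = (LEAST l. \<exists>\<sigma>. length \<sigma> = l \<and> U \<sigma> = Some n)"

text \<open>A rational number is coded as a pair (a, b) meaning a / (b+1).\<close>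
definition rat_dec :: "nat \<Rightarrow> real" where
  "rat_dec c = (case prod_decode c of (a, b) \<Rightarrow> real_of_int (int_decode a) / real (Suc b))"

text \<open>An algebraic number is coded by an integer polynomial and a rational rectangle
  [x1,x2] x [y1,y2]; the code is valid iff the polynomial is nonzero and has exactly one
  root in the rectangle, which is then the number denoted.\<close>
definition alg_dec :: "nat \<Rightarrow> complex option" where
  "alg_dec c = (case prod_decode c of (pc, rc) \<Rightarrow>
     let p = Poly (map (\<lambda>a. complex_of_int (int_decode a)) (list_decode pc));
         r = map rat_dec (list_decode rc);
         inR = (\<lambda>z. length r = 4 \<and> r!0 \<le> Re z \<and> Re z \<le> r!1 \<and> r!2 \<le> Im z \<and> Im z \<le> r!3)
     in if p \<noteq> 0 \<and> (\<exists>!z. inR z \<and> poly p z = 0)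
        then Some (THE z. inR z \<and> poly p z = 0) else None)"

definition vec_dec :: "nat \<Rightarrow> complex list option" where
  "vec_dec c = (let cs = map alg_dec (list_decode c) in
     if None \<in> set cs then None else Some (map the cs))"

definition vset_dec :: "nat \<Rightarrow> complex list set option" where
  "vset_dec c = (let vs = map vec_dec (list_decode c) in
     if None \<in> set vs then None else Some (set (map the vs)))"

text \<open>Vectors in C^(2^m) are lists of length 2^m; matrices are functions on indices.\<close>
definition cinner :: "nat \<Rightarrow> complex list \<Rightarrow> complex list \<Rightarrow> complex" where
  "cinner d v w = (\<Sum>i<d. cnj (v ! i) * w ! i)"

definition orthonormal_alg :: "nat \<Rightarrow> complex list set \<Rightarrow> bool" where
  "orthonormal_alg m F \<longleftrightarrow> finite F \<and>
     (\<forall>v\<in>F. length v = 2 ^ m \<and> (\<forall>i<2 ^ m. algebraic (v ! i))) \<and>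
     (\<forall>v\<in>F. \<forall>w\<in>F. cinner (2 ^ m) v w = (if v = w then 1 else 0))"

definition expect :: "nat \<Rightarrow> (nat \<Rightarrow> nat \<Rightarrow> complex) \<Rightarrow> complex list \<Rightarrow> complex" where
  "expect m \<tau> v = (\<Sum>i<2 ^ m. \<Sum>j<2 ^ m. cnj (v ! i) * \<tau> i j * v ! j)"

text \<open>QK^eps(tau) for tau a density matrix on C^(2^m) (so |tau| = m).\<close>
definition QK :: "(bool list \<Rightarrow> nat option) \<Rightarrow> real \<Rightarrow> nat \<Rightarrow> (nat \<Rightarrow> nat \<Rightarrow> complex) \<Rightarrow> ereal" where
  "QK U \<epsilon> m \<tau> = Inf {ereal (real (length \<sigma>) + log 2 (real (card F))) | \<sigma> F c.
      U \<sigma> = Some c \<and> vset_dec c = Some F \<and> orthonormal_alg m F \<and>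
      Re (\<Sum>v\<in>F. expect m \<tau> v) > \<epsilon>}"

definition tau_mixed :: "nat \<Rightarrow> nat \<Rightarrow> nat \<Rightarrow> complex" where
  "tau_mixed n i j = (if i = j \<and> i < 2 ^ n then complex_of_real (2 powr (- real n)) else 0)"

end

theory Submission
  imports Defs
begin

lemma evalr_det: "evalr f xs y \<Longrightarrow> evalr f xs y' \<Longrightarrow> y = y'"
proof (induction arbitrary: y' rule: evalr.induct)
  case (ev_Z xs)
  from ev_Z.prems show ?case by (cases rule: evalr.cases) simp_all
next
  case (ev_S x xs)
  from ev_S.prems show ?case by (cases rule: evalr.cases) simp_all
next
  case (ev_Id i xs)
  from ev_Id.prems show ?case by (cases rule: evalr.cases) simp_all
next
  case (ev_Cn xs gs zs f y)
  from ev_Cn.prems obtain zs' where z': "list_all2 (\<lambda>g z. evalr g xs z) gs zs'" "evalr f zs' y'"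
    by (cases rule: evalr.cases) simp_all
  have "zs = zs'" using ev_Cn.IH(1) z'(1)
  proof (induction gs arbitrary: zs zs')
    case Nil then show ?case by simp
  next
    case (Cons a gs)
    then show ?case by (auto simp: list_all2_Cons1)
  qed
  then show ?case using ev_Cn.IH(2) z'(2) by simp
next
  case (ev_Pr0 f xs y g)
  from ev_Pr0.prems show ?case by (cases rule: evalr.cases) (simp_all add: ev_Pr0.IH)
next
  case (ev_PrS f g n xs z y)
  from ev_PrS.prems obtain z' where zz: "evalr (Prf f g) (n # xs) z'" "evalr g (z' # n # xs) y'"
    by (cases rule: evalr.cases) auto
  then have "z = z'" using ev_PrS.IH(1) by simp
  then show ?case using ev_PrS.IH(2) zz by simp
next
  case (ev_Mn f y xs)
  from ev_Mn.prems obtain y2 where h: "y' = y2" "evalr f (y2 # xs) 0" "\<forall>z<y2. \<exists>w. w > 0 \<and> evalr f (z # xs) w"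
    by (cases rule: evalr.cases) simp_all
  show ?case
  proof (rule ccontr)
    assume "y \<noteq> y'"
    then have "y < y2 \<or> y2 < y" using h by auto
    then show False
    proof
      assume "y < y2"
      then obtain w where w: "w > 0" "evalr f (y # xs) w" using h by blast
      have "0 = w" using ev_Mn.IH(1)[OF w(2)] .
      then show False using w(1) by simp
    next
      assume "y2 < y"
      then obtain w where w: "w > 0" "\<forall>v. evalr f (y2 # xs) v \<longrightarrow> w = v"
        using ev_Mn.IH(2) by blast
      have "w = 0" using w(2) h(2) by blast
      then show False using w(1) by simp
    qed
  qed
qed


definition computes :: "recf \<Rightarrow> nat \<Rightarrow> (nat list \<Rightarrow> nat) \<Rightarrow> bool" where
  "computes r k f \<longleftrightarrow> (\<forall>xs. length xs = k \<longrightarrow> evalr r xs (f xs))"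

definition prc :: "nat \<Rightarrow> (nat list \<Rightarrow> nat) \<Rightarrow> bool" where
  "prc k f \<longleftrightarrow> (\<exists>r. computes r k f)"

lemma prc_cong: "prc k f \<Longrightarrow> (\<And>xs. length xs = k \<Longrightarrow> f xs = g xs) \<Longrightarrow> prc k g"
  unfolding prc_def computes_def by metis

lemma prc_proj: "i < k \<Longrightarrow> prc k (\<lambda>xs. xs ! i)"
  unfolding prc_def computes_def by (auto intro!: exI[of _ "Idf i"] ev_Id)

lemma prc_zero: "prc k (\<lambda>xs. 0)"
  unfolding prc_def computes_def by (auto intro!: exI[of _ Zf] ev_Z)

lemma prc_suc0: "prc 1 (\<lambda>xs. Suc (xs ! 0))"
  unfolding prc_def computes_def
  by (auto intro!: exI[of _ Sf] simp: length_Suc_conv ev_S)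

lemma list_all2_choose:
  assumes "\<forall>\<phi>\<in>set fs. prc k \<phi>"
  shows "\<exists>rs. list_all2 (\<lambda>r \<phi>. computes r k \<phi>) rs fs"
  using assms
proof (induction fs)
  case Nil then show ?case by auto
next
  case (Cons a fs)
  then obtain rs where "list_all2 (\<lambda>r \<phi>. computes r k \<phi>) rs fs" by auto
  moreover obtain r where "computes r k a" using Cons.prems unfolding prc_def by auto
  ultimately show ?case by (auto intro!: exI[of _ "r # rs"])
qed

lemma prc_comp:
  assumes h: "prc m h" and len: "length fs = m" and fs: "\<forall>\<phi>\<in>set fs. prc k \<phi>"
  shows "prc k (\<lambda>xs. h (map (\<lambda>\<phi>. \<phi> xs) fs))"
proof -
  obtain rh where rh: "computes rh m h" using h unfolding prc_def by auto
  obtain rs where rs: "list_all2 (\<lambda>r \<phi>. computes r k \<phi>) rs fs" using list_all2_choose[OF fs] by auto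
  have "computes (Cnf rh rs) k (\<lambda>xs. h (map (\<lambda>\<phi>. \<phi> xs) fs))"
    unfolding computes_def
  proof (intro allI impI)
    fix xs :: "nat list" assume lx: "length xs = k"
    have "list_all2 (\<lambda>g z. evalr g xs z) rs (map (\<lambda>\<phi>. \<phi> xs) fs)"
      unfolding list_all2_map2 using rs
      by (rule list_all2_mono) (use lx in \<open>auto simp: computes_def\<close>)
    moreover have "evalr rh (map (\<lambda>\<phi>. \<phi> xs) fs) (h (map (\<lambda>\<phi>. \<phi> xs) fs))"
      using rh len unfolding computes_def by auto
    ultimately show "evalr (Cnf rh rs) xs (h (map (\<lambda>\<phi>. \<phi> xs) fs))" by (rule ev_Cn)
  qed
  then show ?thesis unfolding prc_def by auto
qed

lemma prc_rec:
  assumes a: "prc k a" and b: "prc (Suc (Suc k)) b"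
    and f0: "\<And>ys. length ys = k \<Longrightarrow> f (0 # ys) = a ys"
    and fS: "\<And>n ys. length ys = k \<Longrightarrow> f (Suc n # ys) = b (f (n # ys) # n # ys)"
    and kk: "k' = Suc k"
  shows "prc k' f"
proof -
  obtain ra where ra: "computes ra k a" using a unfolding prc_def by auto
  obtain rb where rb: "computes rb (Suc (Suc k)) b" using b unfolding prc_def by auto
  have *: "evalr (Prf ra rb) (n # ys) (f (n # ys))" if "length ys = k" for n ys
  proof (induction n)
    case 0 then show ?case using ra that f0 by (auto simp: computes_def intro!: ev_Pr0)
  next
    case (Suc n)
    have "evalr rb (f (n # ys) # n # ys) (b (f (n # ys) # n # ys))"
      using rb that by (auto simp: computes_def)
    then show ?case using Suc fS[OF that] by (auto intro: ev_PrS)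
  qed
  have "computes (Prf ra rb) (Suc k) f"
    unfolding computes_def
  proof (intro allI impI)
    fix xs :: "nat list" assume "length xs = Suc k"
    then obtain n ys where "xs = n # ys" "length ys = k" by (auto simp: length_Suc_conv)
    then show "evalr (Prf ra rb) xs (f xs)" using * by simp
  qed
  then show ?thesis unfolding prc_def kk by auto
qed

lemma prc_comp1: "prc 1 h \<Longrightarrow> prc k a \<Longrightarrow> prc k (\<lambda>xs. h [a xs])"
  using prc_comp[of 1 h "[a]" k] by simp

lemma prc_comp2: "prc 2 h \<Longrightarrow> prc k a \<Longrightarrow> prc k b \<Longrightarrow> prc k (\<lambda>xs. h [a xs, b xs])"
  using prc_comp[of 2 h "[a, b]" k] by simp

lemma prc_Suc: "prc k a \<Longrightarrow> prc k (\<lambda>xs. Suc (a xs))"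
  using prc_comp1[OF prc_suc0] by simp

lemma prc_const: "prc k (\<lambda>xs. c)"
  by (induction c) (auto intro: prc_zero prc_Suc)

lemma prc_add0: "prc 2 (\<lambda>xs. xs ! 0 + xs ! 1)"
  apply (rule prc_rec[where k=1 and a="\<lambda>ys. ys ! 0" and b="\<lambda>zs. Suc (zs ! 0)"])
     apply (intro prc_proj prc_Suc; simp)
    apply (intro prc_proj prc_Suc; simp)
  by simp_all

lemma prc_add: "prc k a \<Longrightarrow> prc k b \<Longrightarrow> prc k (\<lambda>xs. a xs + b xs)"
  using prc_comp2[OF prc_add0] by simp

lemma prc_mult0: "prc 2 (\<lambda>xs. xs ! 0 * xs ! 1)"
  apply (rule prc_rec[where k=1 and a="\<lambda>ys. 0" and b="\<lambda>zs. zs ! 0 + zs ! 2"])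
     apply (intro prc_proj prc_add prc_zero; simp)
    apply (intro prc_proj prc_add prc_zero; simp)
  by simp_all

lemma prc_mult: "prc k a \<Longrightarrow> prc k b \<Longrightarrow> prc k (\<lambda>xs. a xs * b xs)"
  using prc_comp2[OF prc_mult0] by simp

lemma prc_pred0: "prc 1 (\<lambda>xs. xs ! 0 - 1)"
  apply (rule prc_rec[where k=0 and a="\<lambda>ys. 0" and b="\<lambda>zs. zs ! 1"])
     apply (intro prc_proj prc_zero; simp)
    apply (intro prc_proj prc_zero; simp)
  by simp_all

lemma prc_pred: "prc k a \<Longrightarrow> prc k (\<lambda>xs. a xs - 1)"
  using prc_comp1[OF prc_pred0] by simp

lemma prc_rsub0: "prc 2 (\<lambda>xs. xs ! 1 - xs ! 0)"
  apply (rule prc_rec[where k=1 and a="\<lambda>ys. ys ! 0" and b="\<lambda>zs. zs ! 0 - 1"])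
     apply (intro prc_proj prc_pred; simp)
    apply (intro prc_proj prc_pred; simp)
  by simp_all

lemma prc_sub: "prc k a \<Longrightarrow> prc k b \<Longrightarrow> prc k (\<lambda>xs. a xs - b xs)"
  using prc_comp2[OF prc_rsub0, of k b a] by simp

lemma prc_tri0: "prc 1 (\<lambda>xs. triangle (xs ! 0))"
  apply (rule prc_rec[where k=0 and a="\<lambda>ys. 0" and b="\<lambda>zs. zs ! 0 + Suc (zs ! 1)"])
     apply (intro prc_proj prc_add prc_Suc prc_zero; simp)
    apply (intro prc_proj prc_add prc_Suc prc_zero; simp)
  by simp_all

lemma prc_tri: "prc k a \<Longrightarrow> prc k (\<lambda>xs. triangle (a xs))"
  using prc_comp1[OF prc_tri0] by simp

lemma prc_pow0: "prc 1 (\<lambda>xs. 2 ^ (xs ! 0))"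
  apply (rule prc_rec[where k=0 and a="\<lambda>ys. 1" and b="\<lambda>zs. zs ! 0 + zs ! 0"])
     apply (intro prc_proj prc_add prc_const; simp)
    apply (intro prc_proj prc_add prc_const; simp)
  by simp_all

lemma prc_pow: "prc k a \<Longrightarrow> prc k (\<lambda>xs. 2 ^ (a xs))"
  using prc_comp1[OF prc_pow0] by simp


fun Kf :: "nat \<Rightarrow> nat" where
  "Kf 0 = 0"
| "Kf (Suc n) = Kf n + (1 - (triangle (Suc (Kf n)) - Suc n))"

lemma Kf_bounds: "triangle (Kf n) \<le> n \<and> n < triangle (Suc (Kf n))"
proof (induction n)
  case 0 then show ?case by simp
next
  case (Suc n)
  show ?case
  proof (cases "triangle (Suc (Kf n)) \<le> Suc n")
    case True
    then have "Kf (Suc n) = Suc (Kf n)" by simp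
    then show ?thesis using True Suc by simp
  next
    case False
    then have "Kf (Suc n) = Kf n" by simp
    then show ?thesis using False Suc by simp
  qed
qed

definition pf :: "nat \<Rightarrow> nat" where "pf n = n - triangle (Kf n)"
definition psnd :: "nat \<Rightarrow> nat" where "psnd n = Kf n - pf n"

lemma prod_decode_pf: "prod_decode n = (pf n, psnd n)"
proof -
  have b: "triangle (Kf n) \<le> n" "n < triangle (Kf n) + Suc (Kf n)" using Kf_bounds[of n] by auto
  have "prod_encode (pf n, psnd n) = n"
    using b unfolding prod_encode_def pf_def psnd_def by auto
  then show ?thesis by (metis prod_encode_inverse)
qed

definition stepf :: "nat \<Rightarrow> nat" where "stepf y = (1 - (1 - y)) * psnd (y - 1)"

lemma stepf_enc: "stepf (list_encode l) = list_encode (tl l)"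
proof (cases l)
  case Nil then show ?thesis by (simp add: stepf_def)
next
  case (Cons a l')
  then show ?thesis unfolding stepf_def
    using prod_decode_pf[of "prod_encode (a, list_encode l')"] by simp
qed

lemma iter_enc: "(stepf ^^ i) (list_encode l) = list_encode (drop i l)"
  by (induction i) (simp_all add: stepf_enc drop_Suc tl_drop)

lemma list_encode_0: "list_encode l = 0 \<longleftrightarrow> l = []"
  by (cases l) auto

lemma length_le_list_encode: "length l \<le> list_encode l"
proof (induction l)
  case Nil then show ?case by simp
next
  case (Cons a l)
  then show ?case using le_prod_encode_2[of "list_encode l" a] by simp
qed

fun cntf :: "nat \<Rightarrow> nat \<Rightarrow> nat" where
  "cntf 0 x = 0"
| "cntf (Suc j) x = cntf j x + (1 - (1 - (stepf ^^ j) x))"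

lemma cntf_enc: "cntf j (list_encode l) = min j (length l)"
proof (induction j)
  case 0 then show ?case by simp
next
  case (Suc j)
  have "(stepf ^^ j) (list_encode l) = 0 \<longleftrightarrow> \<not> j < length l"
    by (auto simp: iter_enc list_encode_0)
  then show ?case using Suc by (cases "j < length l") auto
qed

definition lenf :: "nat \<Rightarrow> nat" where "lenf x = cntf x x"

lemma lenf_eq: "lenf x = length (list_decode x)"
proof -
  have "lenf x = cntf (list_encode (list_decode x)) (list_encode (list_decode x))"
    by (simp add: lenf_def)
  also have "\<dots> = length (list_decode x)"
    using cntf_enc length_le_list_encode by (metis min.absorb2)
  finally show ?thesis .
qed

fun lc :: "nat \<Rightarrow> nat \<Rightarrow> nat" where
  "lc 0 L = 0"
| "lc (Suc j) L = lc j L + (1 - (2 ^ Suc j - L))"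

lemma lc_pow: "lc j (2 ^ n) = min j n"
proof (induction j)
  case 0 then show ?case by simp
next
  case (Suc j)
  have "(2::nat) ^ Suc j \<le> 2 ^ n \<longleftrightarrow> j < n"
    using power_increasing_iff[of "2::nat" "Suc j" n] by (simp add: Suc_le_eq)
  then show ?case using Suc by (cases "j < n") auto
qed

definition flog :: "nat \<Rightarrow> nat" where "flog L = lc L L"

lemma flog_pow: "flog (2 ^ n) = n"
  unfolding flog_def lc_pow by (simp add: min_absorb2 less_imp_le)

definition gdec :: "nat \<Rightarrow> nat" where "gdec c = flog (lenf (pf (c - 1)))"

lemma prc_Kf0: "prc 1 (\<lambda>xs. Kf (xs ! 0))"
  apply (rule prc_rec[where k=0 and a="\<lambda>ys. 0" and b="\<lambda>zs. zs ! 0 + (1 - (triangle (Suc (zs ! 0)) - Suc (zs ! 1)))"])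
     apply (intro prc_proj prc_add prc_sub prc_tri prc_Suc prc_const; simp)
    apply (intro prc_proj prc_add prc_sub prc_tri prc_Suc prc_const; simp)
  by simp_all

lemma prc_Kf: "prc k a \<Longrightarrow> prc k (\<lambda>xs. Kf (a xs))"
  using prc_comp1[OF prc_Kf0] by simp

lemma prc_pf: "prc k a \<Longrightarrow> prc k (\<lambda>xs. pf (a xs))"
  unfolding pf_def by (intro prc_sub prc_tri prc_Kf)

lemma prc_psnd: "prc k a \<Longrightarrow> prc k (\<lambda>xs. psnd (a xs))"
  unfolding psnd_def by (intro prc_sub prc_pf prc_Kf)

lemma prc_stepf: "prc k a \<Longrightarrow> prc k (\<lambda>xs. stepf (a xs))"
  unfolding stepf_def by (intro prc_mult prc_sub prc_psnd prc_pred prc_const)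

lemma prc_iter0: "prc 2 (\<lambda>xs. (stepf ^^ (xs ! 0)) (xs ! 1))"
  apply (rule prc_rec[where k=1 and a="\<lambda>ys. ys ! 0" and b="\<lambda>zs. stepf (zs ! 0)"])
     apply (intro prc_proj prc_stepf; simp)
    apply (intro prc_proj prc_stepf; simp)
  by simp_all

lemma prc_iter: "prc k a \<Longrightarrow> prc k b \<Longrightarrow> prc k (\<lambda>xs. (stepf ^^ (a xs)) (b xs))"
  using prc_comp2[OF prc_iter0] by simp

lemma prc_cntf0: "prc 2 (\<lambda>xs. cntf (xs ! 0) (xs ! 1))"
  apply (rule prc_rec[where k=1 and a="\<lambda>ys. 0" and b="\<lambda>zs. zs ! 0 + (1 - (1 - (stepf ^^ (zs ! 1)) (zs ! 2)))"])
     apply (intro prc_proj prc_add prc_sub prc_iter prc_const; simp)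
    apply (intro prc_proj prc_add prc_sub prc_iter prc_const; simp)
  by simp_all

lemma prc_lenf: "prc k a \<Longrightarrow> prc k (\<lambda>xs. lenf (a xs))"
  unfolding lenf_def using prc_comp2[OF prc_cntf0, of k a a] by simp

lemma prc_lc0: "prc 2 (\<lambda>xs. lc (xs ! 0) (xs ! 1))"
  apply (rule prc_rec[where k=1 and a="\<lambda>ys. 0" and b="\<lambda>zs. zs ! 0 + (1 - (2 ^ Suc (zs ! 1) - zs ! 2))"])
     apply (intro prc_proj prc_add prc_sub prc_pow prc_Suc prc_const; simp)
    apply (intro prc_proj prc_add prc_sub prc_pow prc_Suc prc_const; simp)
  by simp_all

lemma prc_flog: "prc k a \<Longrightarrow> prc k (\<lambda>xs. flog (a xs))"
  unfolding flog_def using prc_comp2[OF prc_lc0, of k a a] by simp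

lemma prc_gdec: "prc 1 (\<lambda>xs. gdec (xs ! 0))"
  unfolding gdec_def by (intro prc_flog prc_lenf prc_pf prc_pred prc_proj) simp


lemma pc_map: assumes "partial_computable U"
  shows "partial_computable (\<lambda>\<sigma>. map_option gdec (U \<sigma>))"
proof -
  obtain fU where fU: "\<And>\<sigma> y. evalr fU [bits_to_nat \<sigma>] y \<longleftrightarrow> U \<sigma> = Some y"
    using assms unfolding partial_computable_def by blast
  obtain rg where rg: "computes rg 1 (\<lambda>xs. gdec (xs ! 0))" using prc_gdec unfolding prc_def by blast
  have rgz: "evalr rg [z] (gdec z)" for z using rg[unfolded computes_def, rule_format, of "[z]"] by simp
  have "evalr (Cnf rg [fU]) [bits_to_nat \<sigma>] y \<longleftrightarrow> map_option gdec (U \<sigma>) = Some y" for \<sigma> y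
  proof
    assume "evalr (Cnf rg [fU]) [bits_to_nat \<sigma>] y"
    then obtain zs where zs: "list_all2 (\<lambda>g z. evalr g [bits_to_nat \<sigma>] z) [fU] zs" "evalr rg zs y"
      by (cases rule: evalr.cases) auto
    then obtain z where "zs = [z]" "evalr fU [bits_to_nat \<sigma>] z" by (auto simp: list_all2_Cons1)
    then have "U \<sigma> = Some z" "y = gdec z" using fU zs(2) rgz evalr_det by blast+
    then show "map_option gdec (U \<sigma>) = Some y" by simp
  next
    assume "map_option gdec (U \<sigma>) = Some y"
    then obtain z where "U \<sigma> = Some z" "y = gdec z" by auto
    then show "evalr (Cnf rg [fU]) [bits_to_nat \<sigma>] y"
      using fU rgz by (auto intro!: ev_Cn[where zs="[z]"])
  qed
  then show ?thesis unfolding partial_computable_def by blast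
qed

lemma pf_map: "prefix_free_machine U \<Longrightarrow> prefix_free_machine (\<lambda>\<sigma>. map_option gdec (U \<sigma>))"
  unfolding prefix_free_machine_def by simp

lemma gdec_correct:
  assumes v: "vset_dec c = Some F" and o: "orthonormal_alg n F" and ne: "F \<noteq> {}"
  shows "gdec c = n"
proof -
  define vs where "vs = map vec_dec (list_decode c)"
  have nn: "None \<notin> set vs" and F: "F = set (map the vs)"
    using v unfolding vset_dec_def vs_def Let_def by (auto split: if_splits)
  have "list_decode c \<noteq> []" using ne F vs_def by auto
  then obtain m where m: "c = Suc m" by (cases c) auto
  define x where "x = pf m"
  have ld: "list_decode c = x # list_decode (psnd m)"
    using m by (simp add: prod_decode_pf x_def)
  have xin: "vec_dec x \<in> set vs" using ld vs_def by simp
  then have "vec_dec x \<noteq> None" using nn by metis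
  then obtain w where w: "vec_dec x = Some w" by auto
  have "w \<in> F" using F \<open>vec_dec x \<in> set vs\<close> w by force
  then have "length w = 2 ^ n" using o unfolding orthonormal_alg_def by auto
  moreover have "length w = length (list_decode x)"
    using w unfolding vec_dec_def Let_def by (auto split: if_splits)
  ultimately have "lenf x = 2 ^ n" using lenf_eq by simp
  moreover have "pf (c - 1) = x" using m x_def by simp
  ultimately show ?thesis unfolding gdec_def using flog_pow by simp
qed

lemma expect_one:
  assumes "length v = 2 ^ n" "cinner (2 ^ n) v v = 1"
  shows "expect n (tau_mixed n) v = complex_of_real (2 powr (- real n))"
proof -
  let ?c = "complex_of_real (2 powr (- real n))"
  have inner: "(\<Sum>j<2 ^ n. cnj (v ! i) * tau_mixed n i j * v ! j) = ?c * (cnj (v ! i) * v ! i)"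
    if "i < 2 ^ n" for i
  proof -
    have "(\<Sum>j<2 ^ n. cnj (v ! i) * tau_mixed n i j * v ! j)
        = (\<Sum>j<2 ^ n. if j = i then ?c * (cnj (v ! i) * v ! i) else 0)"
      by (rule sum.cong) (auto simp: tau_mixed_def that)
    also have "\<dots> = ?c * (cnj (v ! i) * v ! i)" using that by simp
    finally show ?thesis .
  qed
  have "expect n (tau_mixed n) v = (\<Sum>i<2 ^ n. ?c * (cnj (v ! i) * v ! i))"
    unfolding expect_def by (rule sum.cong) (simp_all add: inner)
  also have "\<dots> = ?c * cinner (2 ^ n) v v" by (simp add: cinner_def sum_distrib_left)
  finally show ?thesis using assms by simp
qed

lemma expect_sum:
  assumes o: "orthonormal_alg n F"
  shows "Re (\<Sum>v\<in>F. expect n (tau_mixed n) v) = real (card F) * 2 powr (- real n)"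
proof -
  have "(\<Sum>v\<in>F. expect n (tau_mixed n) v) = (\<Sum>v\<in>F. complex_of_real (2 powr (- real n)))"
    by (rule sum.cong) (use o in \<open>auto simp: orthonormal_alg_def intro!: expect_one\<close>)
  then show ?thesis by simp
qed


theorem mainTheorem5:
  fixes U :: "bool list \<Rightarrow> nat option"
  assumes "universal_pf_machine U"
  shows "\<forall>k::nat. \<exists>t::real. \<forall>n::nat.
           QK U (2 powr (- real k)) n (tau_mixed n) \<ge> ereal (real n + real (Kc U n) - t)"
proof
  fix k :: nat
  have pc: "partial_computable U" and pfm: "prefix_free_machine U"
    using assms unfolding universal_pf_machine_def by auto
  obtain \<rho> where \<rho>: "\<And>\<sigma>. U (\<rho> @ \<sigma>) = map_option gdec (U \<sigma>)"
    using assms pc_map[OF pc] pf_map[OF pfm] unfolding universal_pf_machine_def by blast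
  show "\<exists>t::real. \<forall>n::nat.
           QK U (2 powr (- real k)) n (tau_mixed n) \<ge> ereal (real n + real (Kc U n) - t)"
  proof (intro exI allI)
    fix n :: nat
    show "QK U (2 powr (- real k)) n (tau_mixed n) \<ge> ereal (real n + real (Kc U n) - (real (length \<rho>) + real k))"
      unfolding QK_def
    proof (rule Inf_greatest, clarify)
      fix \<sigma> F c
      assume U: "U \<sigma> = Some c" and v: "vset_dec c = Some F" and o: "orthonormal_alg n F"
        and gt: "2 powr (- real k) < Re (\<Sum>v\<in>F. expect n (tau_mixed n) v)"
      have cardgt: "2 powr (- real k) < real (card F) * 2 powr (- real n)"
        using gt expect_sum[OF o] by simp
      have "card F > 0"
      proof (rule ccontr)
        assume "\<not> card F > 0"
        then have "real (card F) * 2 powr (- real n) = 0" by simp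
        moreover have "0 < (2::real) powr (- real k)" by simp
        ultimately show False using cardgt by linarith
      qed
      then have ne: "F \<noteq> {}" by auto
      have "U (\<rho> @ \<sigma>) = Some n" using \<rho> U gdec_correct[OF v o ne] by simp
      then have K: "Kc U n \<le> length (\<rho> @ \<sigma>)" unfolding Kc_def
        by (intro Least_le exI[of _ "\<rho> @ \<sigma>"]) simp
      then have K': "real (Kc U n) \<le> real (length \<rho>) + real (length \<sigma>)" by simp
      have "2 powr (real n - real k) = 2 powr (- real k) * 2 powr (real n)"
        by (simp add: powr_add[symmetric])
      also have "\<dots> < real (card F) * 2 powr (- real n) * 2 powr (real n)"
        using cardgt by simp
      also have "\<dots> = real (card F)" by (simp add: powr_add[symmetric] mult.assoc)
      finally have "2 powr (real n - real k) < real (card F)" .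
      then have lg: "real n - real k < log 2 (real (card F))"
        using \<open>card F > 0\<close> by (subst less_log_iff) auto
      show "ereal (real n + real (Kc U n) - (real (length \<rho>) + real k))
            \<le> ereal (real (length \<sigma>) + log 2 (real (card F)))"
        unfolding ereal_less_eq(3) using K' lg by linarith
    qed
  qed
qed

end
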